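(* Let $0<\underline\beta<\bar\beta$, let $\mathcal P$ be a parameter set, let $G,\tilde G>0$ satisfy the approximation property (AP) of the context, let $a>1$ satisfy $\frac{G}{a}\big(\frac{\ln a}{\ln2}+3\big)^{3/2}\le1$, and let the models $\mathcal S_m$, $m\ge2$, be as in the context. Then there exists a constant $c_{\underline\beta,\bar\beta}>0$ such that for all $\beta\in[\underline\beta,\bar\beta]$, all $s\in\mathcal H(\beta,\mathcal P)$ and all $m\ge2$, $$\mathrm{KL}(s,\mathcal S_m)\le c_{\underline\beta,\bar\beta}\,\underline\lambda(m)^\beta.$$
   Context: $\psi(x)=\pi^{-1/2}e^{-x^2}$, $\psi_\sigma(x)=\sigma^{-1}\psi(x/\sigma)$; $\mathrm{KL}(s,t)=\int s\ln(s/t)$, $\mathrm{KL}(s,\mathcal S)=\inf_{t\in\mathcal S}\mathrm{KL}(s,t)$. For $\beta>0$, $r$ is the largest integer strictly less than $\beta$; a parameter set $\mathcal{P}=\{\gamma,l^+,L,\varepsilon,C,\alpha,\xi,M\}$ (polynomial $L$, positive constants) defines $\mathcal H(\beta,\mathcal P)$: probability densities $f$ with $\ln f$ $r$ times differentiable, $|(\ln f)^{(r)}(x)-(\ln f)^{(r)}(y)|\le r!L(x)|y-x|^{\beta-r}$ for $|x-y|\le\gamma$, $|(\ln f)^{(j)}(0)|\le l^+$; $\int|(\ln f)^{(j)}|^{(2\beta+\varepsilon)/j}f\le C$ ($j=1..r$), $\int|L|^{2+\varepsilon/\beta}f\le C$; $f\le M\psi$; $f>0$ nondecreasing on $(-\infty,-\alpha)$,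 nonincreasing on $(\alpha,\infty)$, $f\ge\xi$ on $[-\alpha,\alpha]$. (AP): for each $\beta\in[\underline\beta,\bar\beta]$ there are $\bar\sigma(\beta)\in(0,1)$ and $c_\beta>0$, both continuous in $\beta$, such that for all $f\in\mathcal H(\beta,\mathcal P)$ and $\sigma\in(0,\bar\sigma(\beta))$ there exists a mixture $\sum_{u=1}^{m'}p_u\psi_\sigma(\cdot-\mu_u)$ with $m'<G\sigma^{-1}|\ln\sigma|^{3/2}$, $|\mu_u|\le\tilde G|\ln\sigma|^{1/2}$ and $\mathrm{KL}(f,\cdot)\le c_\beta\sigma^{2\beta}$. Models: $\sqrt{\underline\lambda(m)}=a\,m^{-1}(\ln m)^{3/2}$, $\bar\mu(m)=\tilde G|\ln\sqrt{\underline\lambda(m)}|^{1/2}$, $\bar\lambda$ a constant with $\bar\lambda>\underline\lambda(m)$ for all $m$, and $\mathcal{S}_m=\{\sum_{u=1}^m p_u\psi_{\sigma_u}(\cdot-\mu_u):\mu_u\in[-\bar\mu(m),\bar\mu(m)],\ \sigma_u^2\in[\underline\lambda(m),\bar\lambda],\ p_u\in[0,1],\ \sum p_u=1\}$. *)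

theory Defs
  imports "HOL-Analysis.Analysis" "HOL-Computational_Algebra.Polynomial"
begin

definition psi :: "real \<Rightarrow> real" where
  "psi x = exp (- (x\<^sup>2)) / sqrt pi"

definition psi_s :: "real \<Rightarrow> real \<Rightarrow> real" where
  "psi_s \<sigma> x = psi (x / \<sigma>) / \<sigma>"

text \<open>If t vanishes on a set of positive measure where s is positive, KL is infinite.
  Otherwise the negative part of s ln(s/t) is always integrable for densities,
  so non-integrability means KL = +infinity.\<close>
definition KL :: "(real \<Rightarrow> real) \<Rightarrow> (real \<Rightarrow> real) \<Rightarrow> ereal" where
  "KL s t =
    (if (AE x in lborel. s x > 0 \<longrightarrow> t x > 0)
        \<and> integrable lborel (\<lambda>x. s x * ln (s x / t x))
     then ereal (\<integral>x. s x * ln (s x / t x) \<partial>lborel)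
     else \<infinity>)"

definition KL_set :: "(real \<Rightarrow> real) \<Rightarrow> (real \<Rightarrow> real) set \<Rightarrow> ereal" where
  "KL_set s S = (INF t\<in>S. KL s t)"

definition is_density :: "(real \<Rightarrow> real) \<Rightarrow> bool" where
  "is_density f \<longleftrightarrow> f \<in> borel_measurable borel \<and> (\<forall>x. f x \<ge> 0)
     \<and> (\<integral>\<^sup>+x. ennreal (f x) \<partial>lborel) = 1"

text \<open>r = largest integer strictly less than beta (for beta > 0).\<close>
definition r_of :: "real \<Rightarrow> nat" where
  "r_of \<beta> = nat (\<lceil>\<beta>\<rceil> - 1)"

definition lder :: "nat \<Rightarrow> (real \<Rightarrow> real) \<Rightarrow> real \<Rightarrow> real" where
  "lder j f = (deriv ^^ j) (\<lambda>x. ln (f x))"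

definition Hclass ::
  "real \<Rightarrow> real \<Rightarrow> real \<Rightarrow> real poly \<Rightarrow> real \<Rightarrow> real \<Rightarrow> real \<Rightarrow> real \<Rightarrow> real
     \<Rightarrow> (real \<Rightarrow> real) set" where
  "Hclass \<beta> \<gamma> lp L \<epsilon> C \<alpha> \<xi> M = {f.
     is_density f \<and>
     (\<forall>x. f x > 0) \<and>
     (\<forall>j < r_of \<beta>. \<forall>x. lder j f differentiable (at x)) \<and>
     (\<forall>x y. \<bar>x - y\<bar> \<le> \<gamma> \<longrightarrow>
        \<bar>lder (r_of \<beta>) f x - lder (r_of \<beta>) f y\<bar>
          \<le> fact (r_of \<beta>) * poly L x * \<bar>y - x\<bar> powr (\<beta> - real (r_of \<beta>))) \<and>
     (\<forall>j \<le> r_of \<beta>. \<bar>lder j f 0\<bar> \<le> lp) \<and>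
     (\<forall>j \<in> {1..r_of \<beta>}.
        (\<integral>\<^sup>+x. ennreal (\<bar>lder j f x\<bar> powr ((2 * \<beta> + \<epsilon>) / real j) * f x) \<partial>lborel)
          \<le> ennreal C) \<and>
     (\<integral>\<^sup>+x. ennreal (\<bar>poly L x\<bar> powr (2 + \<epsilon> / \<beta>) * f x) \<partial>lborel) \<le> ennreal C \<and>
     (\<forall>x. f x \<le> M * psi x) \<and>
     (\<forall>x y. x \<le> y \<and> y < - \<alpha> \<longrightarrow> f x \<le> f y) \<and>
     (\<forall>x y. \<alpha> < x \<and> x \<le> y \<longrightarrow> f y \<le> f x) \<and>
     (\<forall>x. - \<alpha> \<le> x \<and> x \<le> \<alpha> \<longrightarrow> f x \<ge> \<xi>)}"

definition mixture ::
  "nat \<Rightarrow> (nat \<Rightarrow> real) \<Rightarrow> (nat \<Rightarrow> real) \<Rightarrow> (nat \<Rightarrow> real) \<Rightarrow> real \<Rightarrow> real" where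
  "mixture k p \<mu> \<sigma> x = (\<Sum>u\<in>{1..k}. p u * psi_s (\<sigma> u) (x - \<mu> u))"

definition AP ::
  "real \<Rightarrow> real \<Rightarrow> real \<Rightarrow> real \<Rightarrow> real \<Rightarrow> real \<Rightarrow> real poly \<Rightarrow> real \<Rightarrow> real
     \<Rightarrow> real \<Rightarrow> real \<Rightarrow> real \<Rightarrow> bool" where
  "AP G Gt \<beta>l \<beta>u \<gamma> lp L \<epsilon> C \<alpha> \<xi> M \<longleftrightarrow>
    (\<exists>\<sigma>bar c :: real \<Rightarrow> real.
       continuous_on {\<beta>l..\<beta>u} \<sigma>bar \<and> continuous_on {\<beta>l..\<beta>u} c \<and>
       (\<forall>\<beta> \<in> {\<beta>l..\<beta>u}. 0 < \<sigma>bar \<beta> \<and> \<sigma>bar \<beta> < 1 \<and> 0 < c \<beta> \<and>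
          (\<forall>f \<in> Hclass \<beta> \<gamma> lp L \<epsilon> C \<alpha> \<xi> M. \<forall>\<sigma>. 0 < \<sigma> \<and> \<sigma> < \<sigma>bar \<beta> \<longrightarrow>
             (\<exists>m' :: nat. \<exists>p \<mu> :: nat \<Rightarrow> real.
                real m' < G * \<sigma> powr (-1) * \<bar>ln \<sigma>\<bar> powr (3/2) \<and>
                (\<forall>u \<in> {1..m'}. \<bar>\<mu> u\<bar> \<le> Gt * \<bar>ln \<sigma>\<bar> powr (1/2)) \<and>
                (\<forall>u \<in> {1..m'}. 0 \<le> p u) \<and> (\<Sum>u\<in>{1..m'}. p u) = 1 \<and>
                KL f (mixture m' p \<mu> (\<lambda>_. \<sigma>)) \<le> ereal (c \<beta> * \<sigma> powr (2 * \<beta>))))))"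

definition lam_low :: "real \<Rightarrow> nat \<Rightarrow> real" where
  "lam_low a m = (a * (1 / real m) * ln (real m) powr (3/2))\<^sup>2"

definition mu_bar :: "real \<Rightarrow> real \<Rightarrow> nat \<Rightarrow> real" where
  "mu_bar Gt a m = Gt * \<bar>ln (sqrt (lam_low a m))\<bar> powr (1/2)"

definition model :: "real \<Rightarrow> real \<Rightarrow> real \<Rightarrow> nat \<Rightarrow> (real \<Rightarrow> real) set" where
  "model Gt a lam_up m = {mixture m p \<mu> \<sigma> | p \<mu> \<sigma>.
     (\<forall>u \<in> {1..m}. \<mu> u \<in> {- mu_bar Gt a m .. mu_bar Gt a m}) \<and>
     (\<forall>u \<in> {1..m}. \<sigma> u > 0 \<and> (\<sigma> u)\<^sup>2 \<in> {lam_low a m .. lam_up}) \<and>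
     (\<forall>u \<in> {1..m}. p u \<in> {0..1}) \<and> (\<Sum>u\<in>{1..m}. p u) = 1}"

end

theory Submission
  imports Defs "HOL-Probability.Distributions"
begin

lemma psi_pos: "psi x > 0" unfolding psi_def by simp

lemma psi_normal: "psi x = normal_density 0 (1/sqrt 2) x"
  unfolding psi_def normal_density_def by (simp add: power_divide)

lemma sqrt_exp: "sqrt (exp y) = exp (y/2)"
  by (rule real_sqrt_unique) (simp_all add: power2_eq_square exp_add[symmetric])

lemma sqrt_psi: "sqrt (psi x) = (sqrt (2*pi) / sqrt (sqrt pi)) * std_normal_density x"
  unfolding psi_def std_normal_density_def by (simp add: real_sqrt_divide sqrt_exp)

lemma int_sqrt_psi: "integrable lborel (\<lambda>x. sqrt (psi x))"
  unfolding sqrt_psi by simp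

lemma int_x2psi: "integrable lborel (\<lambda>x. x\<^sup>2 * psi x)"
proof -
  have "integrable lborel (\<lambda>x. normal_density 0 (1/sqrt 2) x * (x - 0)^2)"
    by (rule integrable_normal_moment) simp
  moreover have "(\<lambda>x. normal_density 0 (1/sqrt 2) x * (x - 0)^2) = (\<lambda>x. x\<^sup>2 * psi x)"
    by (rule ext) (simp only: psi_normal diff_zero mult.commute)
  ultimately show ?thesis by simp
qed

lemma psi_meas[measurable]: "psi \<in> borel_measurable borel"
  unfolding psi_def by measurable

lemma psi_s_meas[measurable]: "psi_s \<sigma> \<in> borel_measurable borel"
  unfolding psi_s_def by measurable



lemma density_int: assumes "is_density s" shows "integrable lborel s" "(\<integral>x. s x \<partial>lborel) = 1"
proof -
  have m: "s \<in> borel_measurable lborel" and nn: "\<forall>x. s x \<ge> 0" and e: "(\<integral>\<^sup>+x. ennreal (s x) \<partial>lborel) = 1"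
    using assms unfolding is_density_def by auto
  show i: "integrable lborel s"
    by (rule integrableI_nonneg) (use m nn e in auto)
  have "(\<integral>\<^sup>+x. ennreal (s x) \<partial>lborel) = ennreal (\<integral>x. s x \<partial>lborel)"
    by (rule nn_integral_eq_integral) (use i nn in auto)
  with e show "(\<integral>x. s x \<partial>lborel) = 1"
    by (metis ennreal_1 ennreal_inj integral_nonneg_AE nn AE_I2 zero_le_one)
qed

lemma ln_psi_s: assumes "\<sigma> > 0" shows "ln (psi_s \<sigma> x) = - (x/\<sigma>)\<^sup>2 - ln (sqrt pi) - ln \<sigma>"
  using assms unfolding psi_s_def psi_def by (simp add: ln_div ln_mult)

lemma xlnx_lower: assumes "y > 0" shows "y * ln y \<ge> - 2 * sqrt y"
proof -
  have "ln (inverse (sqrt y)) \<le> inverse (sqrt y) - 1" using ln_le_minus_one[of "inverse (sqrt y)"] assms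
    by simp
  hence "ln (sqrt y) \<ge> 1 - 1 / sqrt y" by (simp add: ln_inverse divide_inverse)
  hence "ln y \<ge> 2 - 2 / sqrt y" using assms by (simp add: ln_sqrt)
  hence "y * ln y \<ge> y * (2 - 2 / sqrt y)" using assms by (simp add: mult_left_mono)
  also have "y * (2 - 2 / sqrt y) = 2*y - 2 * sqrt y" using assms
    by (simp add: field_simps)
  finally show ?thesis using assms by simp
qed


lemma lin_aux: "(S::real) \<le> P \<Longrightarrow> P \<le> sL - sp \<Longrightarrow> sL + s\<sigma> \<le> Q \<Longrightarrow> B \<le> D \<Longrightarrow> 0 \<le> sp
  \<Longrightarrow> S + B + (sp + s\<sigma>) \<le> Q + D" by linarith

lemma KL_gauss:
  assumes d: "is_density s" and pos: "\<forall>x. s x > 0" and bd: "\<forall>x. s x \<le> M * psi x"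
    and sg: "\<sigma> > 0" and M: "M > 0"
  shows "KL s (psi_s \<sigma>) \<le> ereal ((\<bar>ln M\<bar> + \<bar>ln \<sigma>\<bar>) + M / \<sigma>\<^sup>2 * (\<integral>x. x\<^sup>2 * psi x \<partial>lborel))"
proof -
  define f where "f x = s x * ln (s x / psi_s \<sigma> x)" for x
  define g where "g x = (\<bar>ln M\<bar> + \<bar>ln \<sigma>\<bar>) * s x + M / \<sigma>\<^sup>2 * (x\<^sup>2 * psi x)" for x
  define h where "h x = (\<bar>ln M\<bar> + \<bar>ln (sqrt pi) + ln \<sigma>\<bar>) * s x + 2 * sqrt M * sqrt (psi x)
      + M / \<sigma>\<^sup>2 * (x\<^sup>2 * psi x)" for x
  have sm[measurable]: "s \<in> borel_measurable borel" using d unfolding is_density_def by auto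
  have si: "integrable lborel s" and s1: "(\<integral>x. s x \<partial>lborel) = 1" using density_int[OF d] by auto
  have tpos: "psi_s \<sigma> x > 0" for x unfolding psi_s_def using psi_pos sg by simp
  have feq: "f x = s x * ln (s x) + s x * (x/\<sigma>)\<^sup>2 + s x * (ln (sqrt pi) + ln \<sigma>)" for x
    unfolding f_def using ln_divide_pos[OF pos[rule_format] tpos, of x x] ln_psi_s[OF sg, of x]
    by (simp add: algebra_simps)
  have lnpi: "ln (sqrt pi) \<ge> 0" using pi_gt3 by simp
  have sle: "s x * ln (s x) \<le> s x * (ln M - x\<^sup>2 - ln (sqrt pi))" for x
  proof -
    have "ln (s x) \<le> ln (M * psi x)" using bd pos M psi_pos by simp
    also have "ln (M * psi x) = ln M - x\<^sup>2 - ln (sqrt pi)"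
      using M psi_pos unfolding psi_def by (simp add: ln_mult ln_div)
    finally show ?thesis using pos by (simp add: mult_left_mono less_imp_le)
  qed
  have sx2: "s x * (x/\<sigma>)\<^sup>2 \<le> M / \<sigma>\<^sup>2 * (x\<^sup>2 * psi x)" for x
  proof -
    have "s x * (x\<^sup>2/\<sigma>\<^sup>2) \<le> (M * psi x) * (x\<^sup>2/\<sigma>\<^sup>2)"
      using bd by (intro mult_right_mono) auto
    thus ?thesis by (simp add: power_divide field_simps)
  qed
  have ssq: "sqrt (s x) \<le> sqrt M * sqrt (psi x)" for x
    using bd by (simp add: real_sqrt_mult[symmetric])
  have fabs: "\<bar>f x\<bar> \<le> h x" for x
  proof -
    have a1: "s x * ln (s x) \<ge> - 2 * (sqrt M * sqrt (psi x))"
      using xlnx_lower[OF pos[rule_format, of x]] ssq[of x] by linarith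
    have a2: "s x * ln (s x) \<le> \<bar>ln M\<bar> * s x"
    proof -
      have "ln M - x\<^sup>2 - ln (sqrt pi) \<le> \<bar>ln M\<bar>"
        using lnpi zero_le_power2[of x] abs_ge_self[of "ln M"] by linarith
      hence "s x * (ln M - x\<^sup>2 - ln (sqrt pi)) \<le> s x * \<bar>ln M\<bar>"
        using pos by (intro mult_left_mono) (auto simp: less_imp_le)
      thus ?thesis using sle[of x] by (simp add: mult.commute)
    qed
    have a3: "\<bar>s x * (ln (sqrt pi) + ln \<sigma>)\<bar> \<le> \<bar>ln (sqrt pi) + ln \<sigma>\<bar> * s x"
      using pos by (simp add: abs_mult less_imp_le)
    have a4: "0 \<le> s x * (x/\<sigma>)\<^sup>2" using pos by (simp add: less_imp_le)
    have a5: "sqrt M * sqrt (psi x) \<ge> 0" using M psi_pos[of x] by (simp add: less_imp_le)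
    have A: "\<bar>s x * ln (s x)\<bar> \<le> \<bar>ln M\<bar> * s x + 2 * (sqrt M * sqrt (psi x))"
      unfolding abs_le_iff using a1 a2 a5 pos[rule_format, of x] abs_ge_zero[of "ln M"]
        mult_nonneg_nonneg[of "\<bar>ln M\<bar>" "s x"] by linarith
    have T: "\<bar>f x\<bar> \<le> \<bar>s x * ln (s x)\<bar> + \<bar>s x * (x/\<sigma>)\<^sup>2\<bar> + \<bar>s x * (ln (sqrt pi) + ln \<sigma>)\<bar>"
      unfolding feq using abs_triangle_ineq[of "s x * ln (s x) + s x * (x/\<sigma>)\<^sup>2" "s x * (ln (sqrt pi) + ln \<sigma>)"]
        abs_triangle_ineq[of "s x * ln (s x)" "s x * (x/\<sigma>)\<^sup>2"] by linarith
    have hx: "h x = \<bar>ln M\<bar> * s x + \<bar>ln (sqrt pi) + ln \<sigma>\<bar> * s x + 2 * (sqrt M * sqrt (psi x))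
      + M / \<sigma>\<^sup>2 * (x\<^sup>2 * psi x)" unfolding h_def by (simp add: distrib_right)
    show ?thesis unfolding hx using T A a3 abs_of_nonneg[OF a4] sx2[of x] by linarith
  qed
  have fm: "f \<in> borel_measurable lborel" unfolding f_def by measurable
  have hi: "integrable lborel h" unfolding h_def
    using si int_sqrt_psi int_x2psi by (intro Bochner_Integration.integrable_add integrable_mult_right) auto
  have fi: "integrable lborel f"
    by (rule Bochner_Integration.integrable_bound[OF hi fm]) (use fabs in \<open>auto intro: order_trans[OF _ abs_ge_self]\<close>)
  have gi: "integrable lborel g" unfolding g_def
    using si int_x2psi by (intro Bochner_Integration.integrable_add integrable_mult_right) auto
  have fg: "f x \<le> g x" for x
  proof -
    have e1: "s x * (ln M - x\<^sup>2 - ln (sqrt pi)) \<le> s x * ln M - s x * ln (sqrt pi)" using pos by (simp add: algebra_simps less_imp_le)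
    have e2: "s x * ln M + s x * ln \<sigma> \<le> (\<bar>ln M\<bar> + \<bar>ln \<sigma>\<bar>) * s x"
      using pos[rule_format, of x] by (smt (verit) abs_ge_self distrib_left mult.commute mult_left_mono)
    have e3: "s x * (ln (sqrt pi) + ln \<sigma>) = s x * ln (sqrt pi) + s x * ln \<sigma>"
      by (simp add: algebra_simps)
    have e4: "0 \<le> s x * ln (sqrt pi)" using pos lnpi by (simp add: less_imp_le)
    show ?thesis unfolding feq g_def e3 by (rule lin_aux[OF sle[of x] e1 e2 sx2[of x] e4])
  qed
  have "(\<integral>x. f x \<partial>lborel) \<le> (\<integral>x. g x \<partial>lborel)"
    by (rule integral_mono[OF fi gi]) (use fg in auto)
  also have "(\<integral>x. g x \<partial>lborel) = (\<bar>ln M\<bar> + \<bar>ln \<sigma>\<bar>) + M / \<sigma>\<^sup>2 * (\<integral>x. x\<^sup>2 * psi x \<partial>lborel)"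
    unfolding g_def using si int_x2psi s1 by (simp add: Bochner_Integration.integral_add)
  finally have I: "(\<integral>x. f x \<partial>lborel) \<le> (\<bar>ln M\<bar> + \<bar>ln \<sigma>\<bar>) + M / \<sigma>\<^sup>2 * (\<integral>x. x\<^sup>2 * psi x \<partial>lborel)" .
  have "KL s (psi_s \<sigma>) = ereal (\<integral>x. f x \<partial>lborel)"
    unfolding KL_def using fi tpos unfolding f_def by simp
  with I show ?thesis by simp
qed


lemma mem_model:
  assumes mm: "m' \<le> m" and mu: "\<forall>u\<in>{1..m'}. \<bar>\<mu> u\<bar> \<le> mu_bar Gt a m" and pn: "\<forall>u\<in>{1..m'}. 0 \<le> p u"
    and ps: "(\<Sum>u\<in>{1..m'}. p u) = 1" and sg: "\<sigma> > 0" and l1: "lam_low a m \<le> \<sigma>\<^sup>2" and l2: "\<sigma>\<^sup>2 \<le> lam_up"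
    and mb: "0 \<le> mu_bar Gt a m"
  shows "mixture m' p \<mu> (\<lambda>_. \<sigma>) \<in> model Gt a lam_up m"
proof -
  define p' where "p' u = (if u \<le> m' then p u else 0)" for u
  define \<mu>' where "\<mu>' u = (if u \<le> m' then \<mu> u else 0)" for u
  have sub: "{1..m'} \<subseteq> {1..m}" using mm by auto
  have eqf: "mixture m p' \<mu>' (\<lambda>_. \<sigma>) = mixture m' p \<mu> (\<lambda>_. \<sigma>)"
  proof
    fix x
    show "mixture m p' \<mu>' (\<lambda>_. \<sigma>) x = mixture m' p \<mu> (\<lambda>_. \<sigma>) x"
      unfolding mixture_def
      by (rule sum.mono_neutral_cong_right[OF _ sub]) (auto simp: p'_def \<mu>'_def)
  qed
  have psum: "(\<Sum>u\<in>{1..m}. p' u) = 1"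
    using ps by (subst sum.mono_neutral_cong_right[OF _ sub, of p' p]) (auto simp: p'_def)
  have ple: "p u \<le> 1" if "u \<in> {1..m'}" for u
    using member_le_sum[of u "{1..m'}" p] that pn ps by auto
  have "mixture m p' \<mu>' (\<lambda>_. \<sigma>) \<in> model Gt a lam_up m"
    unfolding model_def
  proof (intro CollectI exI conjI ballI)
    show "mixture m p' \<mu>' (\<lambda>_. \<sigma>) = mixture m p' \<mu>' (\<lambda>_. \<sigma>)" ..
    fix u assume u: "u \<in> {1..m}"
    show "\<mu>' u \<in> {- mu_bar Gt a m..mu_bar Gt a m}" using mu mb u by (force simp: \<mu>'_def abs_le_iff)
  next
    fix u assume u: "u \<in> {1..m}"
    show "p' u \<in> {0..1}" using pn ple u by (auto simp: p'_def)
  next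
    fix u assume u: "u \<in> {1..m}"
    show "0 < \<sigma>" by (rule sg)
  next
    fix u assume u: "u \<in> {1..m}"
    show "\<sigma>\<^sup>2 \<in> {lam_low a m..lam_up}" using l1 l2 by auto
  next
    show "(\<Sum>u\<in>{1..m}. p' u) = 1" by (rule psum)
  qed
  with eqf show ?thesis by simp
qed

lemma count_bound:
  fixes m :: nat and a G :: real
  assumes m: "2 \<le> m" and a: "1 < a" and G: "0 < G" and hyp: "G / a * (ln a / ln 2 + 3) powr (3/2) \<le> 1"
    and sdef: "\<sigma> = a * (1 / real m) * ln (real m) powr (3/2)" and s1: "\<sigma> < 1"
  shows "G * \<sigma> powr -1 * \<bar>ln \<sigma>\<bar> powr (3/2) \<le> real m"
proof -
  define t where "t = ln (real m)"
  define K0 where "K0 = ln a / ln 2 + 3"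
  have t23: "t \<ge> 2/3"
  proof -
    have "ln 2 \<le> t" unfolding t_def using m by simp
    thus ?thesis using ln2_ge_two_thirds by linarith
  qed
  have tp: "t > 0" using t23 by simp
  have Tp: "t powr (3/2) > 0" using tp by simp
  have mp: "real m > 0" using m by simp
  have sp: "\<sigma> > 0" unfolding sdef t_def[symmetric] using a mp Tp by simp
  have lns: "ln \<sigma> = ln a - t + (3/2) * ln t"
    unfolding sdef t_def using a mp tp t_def by (simp add: ln_mult ln_div)
  have lnt: "- ln t \<le> 1/t - 1"
    using ln_le_minus_one[of "1/t"] tp by (simp add: ln_div)
  have "1/t \<le> 3/2" using t23 tp by (simp add: field_simps)
  hence "- (3/2) * ln t \<le> 2 * t" using lnt t23 by linarith
  moreover have "ln a \<ge> 0" using a by simp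
  moreover have "ln a / ln 2 * t \<ge> 0" using a tp by simp
  ultimately have "- ln \<sigma> \<le> K0 * t" unfolding lns K0_def by (simp add: algebra_simps)
  moreover have "ln \<sigma> < 0" using sp s1 by simp
  ultimately have abs: "\<bar>ln \<sigma>\<bar> \<le> K0 * t" by simp
  have K0p: "K0 \<ge> 0" unfolding K0_def using a by simp
  have "\<bar>ln \<sigma>\<bar> powr (3/2) \<le> (K0 * t) powr (3/2)" by (rule powr_mono2) (use abs in auto)
  also have "\<dots> = K0 powr (3/2) * t powr (3/2)" using K0p tp by (simp add: powr_mult)
  finally have B: "\<bar>ln \<sigma>\<bar> powr (3/2) \<le> K0 powr (3/2) * t powr (3/2)" .
  have "G * \<sigma> powr -1 * \<bar>ln \<sigma>\<bar> powr (3/2) \<le> G * \<sigma> powr -1 * (K0 powr (3/2) * t powr (3/2))"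
    using B G sp by (intro mult_left_mono) auto
  also have "\<dots> = real m * (G / a * K0 powr (3/2))"
    using sp a mp Tp unfolding sdef t_def[symmetric] by (simp add: field_simps)
  also have "\<dots> \<le> real m * 1" using hyp mp unfolding K0_def by (intro mult_left_mono) auto
  finally show ?thesis by simp
qed


theorem lemma7:
  fixes \<beta>l \<beta>u G Gt a lam_up \<gamma> lp \<epsilon> C \<alpha> \<xi> M :: real
    and L :: "real poly"
  assumes "0 < \<beta>l" and "\<beta>l < \<beta>u"
    and "0 < \<gamma>" and "0 < lp" and "0 < \<epsilon>" and "0 < C" and "0 < \<alpha>" and "0 < \<xi>" and "0 < M"
    and "0 < G" and "0 < Gt"
    and "AP G Gt \<beta>l \<beta>u \<gamma> lp L \<epsilon> C \<alpha> \<xi> M"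
    and "1 < a" and "G / a * (ln a / ln 2 + 3) powr (3/2) \<le> 1"
    and "\<forall>m. lam_up > lam_low a m"
  shows "\<exists>c > 0. \<forall>\<beta> \<in> {\<beta>l..\<beta>u}. \<forall>s \<in> Hclass \<beta> \<gamma> lp L \<epsilon> C \<alpha> \<xi> M. \<forall>m \<ge> 2.
           KL_set s (model Gt a lam_up m) \<le> ereal (c * lam_low a m powr \<beta>)"
proof -
  from assms(12) obtain \<sigma>b cf :: "real \<Rightarrow> real" where cs: "continuous_on {\<beta>l..\<beta>u} \<sigma>b"
    and cc: "continuous_on {\<beta>l..\<beta>u} cf"
    and P: "\<forall>\<beta> \<in> {\<beta>l..\<beta>u}. 0 < \<sigma>b \<beta> \<and> \<sigma>b \<beta> < 1 \<and> 0 < cf \<beta> \<and>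
          (\<forall>f \<in> Hclass \<beta> \<gamma> lp L \<epsilon> C \<alpha> \<xi> M. \<forall>\<sigma>. 0 < \<sigma> \<and> \<sigma> < \<sigma>b \<beta> \<longrightarrow>
             (\<exists>m' :: nat. \<exists>p \<mu> :: nat \<Rightarrow> real.
                real m' < G * \<sigma> powr (-1) * \<bar>ln \<sigma>\<bar> powr (3/2) \<and>
                (\<forall>u \<in> {1..m'}. \<bar>\<mu> u\<bar> \<le> Gt * \<bar>ln \<sigma>\<bar> powr (1/2)) \<and>
                (\<forall>u \<in> {1..m'}. 0 \<le> p u) \<and> (\<Sum>u\<in>{1..m'}. p u) = 1 \<and>
                KL f (mixture m' p \<mu> (\<lambda>_. \<sigma>)) \<le> ereal (cf \<beta> * \<sigma> powr (2 * \<beta>))))"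
    unfolding AP_def by blast
  have ne: "{\<beta>l..\<beta>u} \<noteq> {}" using assms(2) by auto
  obtain b1 where b1: "b1 \<in> {\<beta>l..\<beta>u}" "\<forall>y\<in>{\<beta>l..\<beta>u}. cf y \<le> cf b1"
    using continuous_attains_sup[OF compact_Icc ne cc] by blast
  obtain b0 where b0: "b0 \<in> {\<beta>l..\<beta>u}" "\<forall>y\<in>{\<beta>l..\<beta>u}. \<sigma>b b0 \<le> \<sigma>b y"
    using continuous_attains_inf[OF compact_Icc ne cs] by blast
  define C1 where "C1 = cf b1"
  define s0 where "s0 = \<sigma>b b0"
  have C1: "C1 > 0" using P b1 unfolding C1_def by blast
  have s0p: "s0 > 0" and s01: "s0 < 1" using P b0 unfolding s0_def by blast+
  define I2 where "I2 = (\<integral>x. x\<^sup>2 * psi x \<partial>lborel)"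
  have I2: "I2 \<ge> 0" unfolding I2_def
    by (rule Bochner_Integration.integral_nonneg) (simp add: psi_pos less_imp_le)
  define K where "K = \<bar>ln M\<bar> + \<bar>ln s0\<bar> + \<bar>ln (sqrt lam_up)\<bar> + M / s0\<^sup>2 * I2"
  define \<delta> where "\<delta> = min 1 (s0\<^sup>2 powr \<beta>u)"
  have \<delta>p: "\<delta> > 0" unfolding \<delta>_def using s0p by simp
  have Kp: "K \<ge> 0" unfolding K_def using I2 assms(9) by simp
  define c where "c = max C1 (K / \<delta>)"
  have cp: "c > 0" unfolding c_def using C1 by simp
  show ?thesis
  proof (intro exI[of _ c] conjI ballI allI impI)
    show "c > 0" by (rule cp)
    fix \<beta> s and m :: nat
    assume \<beta>: "\<beta> \<in> {\<beta>l..\<beta>u}" and sH: "s \<in> Hclass \<beta> \<gamma> lp L \<epsilon> C \<alpha> \<xi> M" and m: "2 \<le> m"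
    have sd: "is_density s" "\<forall>x. s x > 0" "\<forall>x. s x \<le> M * psi x"
      using sH unfolding Hclass_def by auto
    have \<beta>0: "\<beta> \<ge> 0" using \<beta> assms(1) by simp
    have mp: "real m > 0" using m by simp
    have tp: "ln (real m) > 0" using m by simp
    define \<sigma> where "\<sigma> = sqrt (lam_low a m)"
    have \<sigma>eq: "\<sigma> = a * (1 / real m) * ln (real m) powr (3/2)"
      unfolding \<sigma>_def lam_low_def using assms(13) mp tp by simp
    have \<sigma>p: "\<sigma> > 0" unfolding \<sigma>eq using assms(13) mp tp by simp
    have lam: "lam_low a m = \<sigma>\<^sup>2" unfolding \<sigma>_def
      by (rule real_sqrt_pow2[symmetric]) (simp add: lam_low_def)
    have lampow: "lam_low a m powr \<beta> = \<sigma> powr (2 * \<beta>)"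
      unfolding lam using \<sigma>p by (simp add: powr_powr[symmetric])
    have lup: "\<sigma>\<^sup>2 \<le> lam_up" using assms(15) lam by (metis less_imp_le)
    have mub: "mu_bar Gt a m = Gt * \<bar>ln \<sigma>\<bar> powr (1/2)" unfolding mu_bar_def \<sigma>_def ..
    have mub0: "0 \<le> mu_bar Gt a m" unfolding mub using assms(11) by simp
    have KLle: "KL_set s (model Gt a lam_up m) \<le> KL s t" if "t \<in> model Gt a lam_up m" for t
      unfolding KL_set_def using that by (rule INF_lower)
    show "KL_set s (model Gt a lam_up m) \<le> ereal (c * lam_low a m powr \<beta>)"
    proof (cases "\<sigma> < s0")
      case True
      have "\<sigma> < \<sigma>b \<beta>" using True b0 \<beta> unfolding s0_def by fastforce
      moreover have "\<forall>f \<in> Hclass \<beta> \<gamma> lp L \<epsilon> C \<alpha> \<xi> M. \<forall>\<sigma>. 0 < \<sigma> \<and> \<sigma> < \<sigma>b \<beta> \<longrightarrow>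
             (\<exists>m' :: nat. \<exists>p \<mu> :: nat \<Rightarrow> real.
                real m' < G * \<sigma> powr (-1) * \<bar>ln \<sigma>\<bar> powr (3/2) \<and>
                (\<forall>u \<in> {1..m'}. \<bar>\<mu> u\<bar> \<le> Gt * \<bar>ln \<sigma>\<bar> powr (1/2)) \<and>
                (\<forall>u \<in> {1..m'}. 0 \<le> p u) \<and> (\<Sum>u\<in>{1..m'}. p u) = 1 \<and>
                KL f (mixture m' p \<mu> (\<lambda>_. \<sigma>)) \<le> ereal (cf \<beta> * \<sigma> powr (2 * \<beta>)))"
        using P \<beta> by blast
      ultimately obtain m' and p \<mu> :: "nat \<Rightarrow> real" where
        m'b: "real m' < G * \<sigma> powr (-1) * \<bar>ln \<sigma>\<bar> powr (3/2)"
        and mu: "\<forall>u \<in> {1..m'}. \<bar>\<mu> u\<bar> \<le> Gt * \<bar>ln \<sigma>\<bar> powr (1/2)"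
        and pn: "\<forall>u \<in> {1..m'}. 0 \<le> p u" and ps: "(\<Sum>u\<in>{1..m'}. p u) = 1"
        and KLb: "KL s (mixture m' p \<mu> (\<lambda>_. \<sigma>)) \<le> ereal (cf \<beta> * \<sigma> powr (2 * \<beta>))"
        using sH \<sigma>p by blast
      have "G * \<sigma> powr -1 * \<bar>ln \<sigma>\<bar> powr (3/2) \<le> real m"
        by (rule count_bound[OF m assms(13) assms(10) assms(14) \<sigma>eq]) (use True s01 in linarith)
      with m'b have mm: "m' \<le> m" by linarith
      have mem: "mixture m' p \<mu> (\<lambda>_. \<sigma>) \<in> model Gt a lam_up m"
        by (rule mem_model[OF mm _ pn ps \<sigma>p _ lup mub0]) (use mu mub lam in auto)
      have "cf \<beta> \<le> C1" using b1 \<beta> unfolding C1_def by blast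
      hence "cf \<beta> * \<sigma> powr (2 * \<beta>) \<le> c * \<sigma> powr (2 * \<beta>)"
        unfolding c_def by (intro mult_right_mono) auto
      hence "ereal (cf \<beta> * \<sigma> powr (2 * \<beta>)) \<le> ereal (c * lam_low a m powr \<beta>)"
        unfolding lampow by simp
      with KLle[OF mem] KLb show ?thesis by (meson order_trans)
    next
      case False
      hence s0s: "s0 \<le> \<sigma>" by simp
      have mix1: "mixture 1 (\<lambda>_. 1) (\<lambda>_. 0) (\<lambda>_. \<sigma>) = psi_s \<sigma>"
        by (rule ext) (simp add: mixture_def)
      have mem: "mixture 1 (\<lambda>_. 1) (\<lambda>_. 0) (\<lambda>_. \<sigma>) \<in> model Gt a lam_up m"
        by (rule mem_model[OF _ _ _ _ \<sigma>p _ lup mub0]) (use m mub0 lam in auto)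
      have G1: "KL s (psi_s \<sigma>) \<le> ereal ((\<bar>ln M\<bar> + \<bar>ln \<sigma>\<bar>) + M / \<sigma>\<^sup>2 * I2)"
        unfolding I2_def by (rule KL_gauss[OF sd \<sigma>p assms(9)])
      have su: "\<sigma> \<le> sqrt lam_up" using lup \<sigma>p real_le_rsqrt by blast
      have "ln s0 \<le> ln \<sigma>" using s0s s0p by simp
      moreover have "ln \<sigma> \<le> ln (sqrt lam_up)"
        using su \<sigma>p ln_le_cancel_iff[of \<sigma> "sqrt lam_up"] by linarith
      ultimately have l1: "\<bar>ln \<sigma>\<bar> \<le> \<bar>ln s0\<bar> + \<bar>ln (sqrt lam_up)\<bar>" by linarith
      have "M / \<sigma>\<^sup>2 \<le> M / s0\<^sup>2" using s0s s0p assms(9)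
        by (intro divide_left_mono power_mono) (auto simp: less_imp_le)
      hence l2: "M / \<sigma>\<^sup>2 * I2 \<le> M / s0\<^sup>2 * I2" using I2 by (rule mult_right_mono)
      have KK: "(\<bar>ln M\<bar> + \<bar>ln \<sigma>\<bar>) + M / \<sigma>\<^sup>2 * I2 \<le> K" unfolding K_def using l1 l2 by linarith
      have lpow: "\<delta> \<le> lam_low a m powr \<beta>"
      proof (cases "lam_low a m \<ge> 1")
        case True
        then show ?thesis unfolding \<delta>_def using ge_one_powr_ge_zero[OF True \<beta>0] by linarith
      next
        case False
        have l0: "s0\<^sup>2 \<le> lam_low a m" unfolding lam using s0s s0p by (intro power_mono) auto
        have "s0\<^sup>2 powr \<beta>u \<le> lam_low a m powr \<beta>u" by (rule powr_mono2) (use l0 \<beta> assms(1) in auto)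
        also have "\<dots> \<le> lam_low a m powr \<beta>" by (rule powr_mono') (use \<beta> False lam in auto)
        finally show ?thesis unfolding \<delta>_def by linarith
      qed
      have "K = (K / \<delta>) * \<delta>" using \<delta>p by simp
      also have "\<dots> \<le> c * lam_low a m powr \<beta>"
        using lpow \<delta>p Kp C1 unfolding c_def by (intro mult_mono) auto
      finally have "K \<le> c * lam_low a m powr \<beta>" .
      with KK G1 have "KL s (psi_s \<sigma>) \<le> ereal (c * lam_low a m powr \<beta>)"
        by (meson ereal_less_eq(3) order_trans)
      with KLle[OF mem] show ?thesis unfolding mix1 by (meson order_trans)
    qed
  qed
qed

end
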